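(* Let $\epsilon>0$, $\rho\ge 1+\epsilon$, $S\ge 0$, and let $\beta_1, \dots, \beta_k$ be nonnegative reals such that $1+\epsilon \leq \beta_i \leq \rho$ for all $i$ and $\sum_{i=1}^k \beta_i \geq S$. Then \[ \prod_{i=1}^k \beta_i \geq \min\left\{ \rho^{S/{\rho}},\ (1+\epsilon)^{S/{(1+\epsilon)}} \right\}. \] *)

theory Defs
  imports Complex_Main
begin

end

theory Submission
  imports Defs
begin

lemma lnx_inc:
  fixes a x :: real
  assumes "0 < a" "a \<le> x" "x \<le> exp 1"
  shows "ln a / a \<le> ln x / x"
proof -
  have "\<And>t. a \<le> t \<Longrightarrow> t \<le> x \<Longrightarrow> ((\<lambda>t. ln t / t) has_real_derivative ((1 - ln t) / t^2)) (at t)"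
  proof -
    fix t :: real assume t: "a \<le> t" "t \<le> x"
    hence tp: "t > 0" using assms by auto
    show "((\<lambda>t. ln t / t) has_real_derivative ((1 - ln t) / t^2)) (at t)"
      using tp by (auto intro!: derivative_eq_intros simp: field_simps power2_eq_square)
  qed
  moreover have "\<And>t. a \<le> t \<Longrightarrow> t \<le> x \<Longrightarrow> 0 \<le> (1 - ln t) / t^2"
  proof -
    fix t :: real assume t: "a \<le> t" "t \<le> x"
    hence tp: "t > 0" using assms by auto
    have "ln t \<le> ln (exp 1)" using t assms tp by (subst ln_le_cancel_iff) auto
    thus "0 \<le> (1 - ln t) / t^2" by simp
  qed
  ultimately show ?thesis
    using DERIV_nonneg_imp_nondecreasing[of a x "\<lambda>t. ln t / t"] assms by blast
qed

lemma lnx_min: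
  fixes a r x :: real
  assumes "0 < a" "a \<le> x" "x \<le> r"
  shows "min (ln a / a) (ln r / r) \<le> ln x / x"
proof (cases "x \<le> exp 1")
  case True
  then show ?thesis using lnx_inc[OF assms(1,2)] by simp
next
  case False
  then show ?thesis using ln_x_over_x_mono[of x r] assms by simp
qed

theorem lemmaA1:
  fixes \<epsilon> \<rho> S :: real and k :: nat and \<beta> :: "nat \<Rightarrow> real"
  assumes "\<epsilon> > 0"
    and "\<rho> \<ge> 1 + \<epsilon>"
    and "S \<ge> 0"
    and "\<And>i. i \<in> {1..k} \<Longrightarrow> \<beta> i \<ge> 0"
    and "\<And>i. i \<in> {1..k} \<Longrightarrow> 1 + \<epsilon> \<le> \<beta> i \<and> \<beta> i \<le> \<rho>"
    and "(\<Sum>i=1..k. \<beta> i) \<ge> S"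
  shows "(\<Prod>i=1..k. \<beta> i) \<ge> min (\<rho> powr (S / \<rho>)) ((1 + \<epsilon>) powr (S / (1 + \<epsilon>)))"
proof -
  define a where "a = 1 + \<epsilon>"
  have a1: "a > 1" using assms(1) a_def by simp
  have r: "\<rho> \<ge> a" using assms(2) a_def by simp
  define m where "m = min (ln a / a) (ln \<rho> / \<rho>)"
  have m0: "m \<ge> 0" using a1 r by (simp add: m_def)
  have bpos: "\<And>i. i \<in> {1..k} \<Longrightarrow> \<beta> i > 0"
  proof -
    fix i assume "i \<in> {1..k}"
    thus "\<beta> i > 0" using assms(5) a_def a1 by force
  qed
  have "\<And>i. i \<in> {1..k} \<Longrightarrow> m * \<beta> i \<le> ln (\<beta> i)"
  proof -
    fix i assume i: "i \<in> {1..k}"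
    have "m \<le> ln (\<beta> i) / \<beta> i" unfolding m_def
      using lnx_min[of a "\<beta> i" \<rho>] assms(5)[OF i] a1 a_def by simp
    thus "m * \<beta> i \<le> ln (\<beta> i)" using bpos[OF i] by (simp add: field_simps)
  qed
  hence "(\<Sum>i=1..k. m * \<beta> i) \<le> (\<Sum>i=1..k. ln (\<beta> i))" by (rule sum_mono)
  hence "m * S \<le> (\<Sum>i=1..k. ln (\<beta> i))"
    using mult_left_mono[OF assms(6) m0] by (simp add: sum_distrib_left)
  also have "\<dots> = ln (\<Prod>i=1..k. \<beta> i)"
    using bpos by (subst ln_prod) (auto, fastforce)
  finally have "exp (m * S) \<le> (\<Prod>i=1..k. \<beta> i)"
    using bpos prod_pos[of "{1..k}" \<beta>]
    by (metis exp_le_cancel_iff exp_ln)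
  moreover have "min (\<rho> powr (S / \<rho>)) (a powr (S / a)) \<le> exp (m * S)"
  proof -
    have e1: "\<rho> powr (S / \<rho>) = exp ((ln \<rho> / \<rho>) * S)" using r a1 by (simp add: powr_def)
    have e2: "a powr (S / a) = exp ((ln a / a) * S)" using a1 by (simp add: powr_def)
    show ?thesis
    proof (cases "ln a / a \<le> ln \<rho> / \<rho>")
      case True
      then show ?thesis unfolding e1 e2 m_def by simp
    next
      case False
      then show ?thesis unfolding e1 e2 m_def by simp
    qed
  qed
  ultimately show ?thesis unfolding a_def by simp
qed

end
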